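(* Let $A\subseteq\mathbb{N}$ and $x\in\big(\underline{d}_\infty(A),\overline{d}_\infty(A)\big)$. Then there is a function $\mu:\mathcal{P}(\mathbb{N})\to[0,1]$ of the form $$\mu(E)=\int_{\Omega}\mu_\alpha^{\mathcal{F}}(E)\,\mathrm{d}\psi(\mathcal{F},\alpha),\qquad E\subseteq\mathbb{N},$$ for some Borel probability measure $\psi$ on $\Omega=\beta\mathbb{N}^*\times[-1,\infty)$, which is a density measure and satisfies $\mu(A)=x$.
   Context: $\mathbb{N}=\{1,2,3,\dots\}$. For $A\subseteq\mathbb{N}$ let $A(n)=|A\cap[1,n]|$; $\mathcal{D}$ is the collection of sets for which $d(A)=\lim_{n\to\infty}A(n)/n$ exists. A density measure is a function $\mu:\mathcal{P}(\mathbb{N})\to[0,1]$ with $\mu(\mathbb{N})=1$, finitely additive on disjoint sets, and $\mu=d$ on $\mathcal{D}$. For $\alpha\ge-1$ and $A\subseteq\mathbb{N}$ put $A_\alpha(n)=\sum_{k=1}^n\chi_A(k)k^\alpha$ (so $\mathbb{N}_\alpha(n)=\sum_{k=1}^nk^\alpha$), $\underline{d}_\alpha(A)=\liminf_{n\to\infty}\frac{A_\alpha(n)}{\mathbb{N}_\alpha(n)}$, $\overline{d}_\alpha(A)=\limsup_{n\to\infty}\frac{A_\alpha(n)}{\mathbb{N}_\alpha(n)}$, $\underline{d}_\infty(A)=\inf_{\alpha\ge-1}\underline{d}_\alpha(A)$ and $\overline{d}_\infty(A)=\sup_{\alpha\ge-1}\overline{d}_\alpha(A)$. $\beta\mathbb{N}^*$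 denotes the set of free ultrafilters on $\mathbb{N}$ (with the Stone–Čech topology). For a free ultrafilter $\mathcal{F}$ and a bounded real sequence $(x_n)$, $\mathcal{F}\text{-}\lim x_n$ is the unique $L$ with $\{n;|x_n-L|<\varepsilon\}\in\mathcal{F}$ for all $\varepsilon>0$. Set $\mu_\alpha^{\mathcal{F}}(E)=\mathcal{F}\text{-}\lim\frac{E_\alpha(n)}{\mathbb{N}_\alpha(n)}$. *)

theory Defs
  imports "HOL-Probability.Probability"
begin

text \<open>The paper's \<open>\<nat> = {1,2,3,...}\<close> is rendered as the set \<open>{1..} :: nat set\<close>.\<close>

definition Npos :: "nat set" where "Npos = {1..}"

definition cnt :: "nat set \<Rightarrow> nat \<Rightarrow> nat" where
  "cnt A n = card (A \<inter> {1..n})"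

definition has_density :: "nat set \<Rightarrow> real \<Rightarrow> bool" where
  "has_density A L \<longleftrightarrow> ((\<lambda>n. real (cnt A n) / real n) \<longlonglongrightarrow> L)"

definition density_measure :: "(nat set \<Rightarrow> real) \<Rightarrow> bool" where
  "density_measure \<mu> \<longleftrightarrow>
     (\<forall>E. E \<subseteq> Npos \<longrightarrow> 0 \<le> \<mu> E \<and> \<mu> E \<le> 1) \<and>
     \<mu> Npos = 1 \<and>
     (\<forall>E F. E \<subseteq> Npos \<longrightarrow> F \<subseteq> Npos \<longrightarrow> E \<inter> F = {} \<longrightarrow> \<mu> (E \<union> F) = \<mu> E + \<mu> F) \<and>
     (\<forall>E L. E \<subseteq> Npos \<longrightarrow> has_density E L \<longrightarrow> \<mu> E = L)"

definition wcnt :: "real \<Rightarrow> nat set \<Rightarrow> nat \<Rightarrow> real" where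
  "wcnt \<alpha> A n = (\<Sum>k\<in>A \<inter> {1..n}. real k powr \<alpha>)"

definition wratio :: "real \<Rightarrow> nat set \<Rightarrow> nat \<Rightarrow> real" where
  "wratio \<alpha> A n = wcnt \<alpha> A n / wcnt \<alpha> Npos n"

definition lower_d_alpha :: "real \<Rightarrow> nat set \<Rightarrow> ereal" where
  "lower_d_alpha \<alpha> A = liminf (\<lambda>n. ereal (wratio \<alpha> A n))"

definition upper_d_alpha :: "real \<Rightarrow> nat set \<Rightarrow> ereal" where
  "upper_d_alpha \<alpha> A = limsup (\<lambda>n. ereal (wratio \<alpha> A n))"

definition lower_d_inf :: "nat set \<Rightarrow> ereal" where
  "lower_d_inf A = (INF \<alpha>\<in>{-1..}. lower_d_alpha \<alpha> A)"

definition upper_d_inf :: "nat set \<Rightarrow> ereal" where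
  "upper_d_inf A = (SUP \<alpha>\<in>{-1..}. upper_d_alpha \<alpha> A)"

definition free_ultrafilter :: "nat filter \<Rightarrow> bool" where
  "free_ultrafilter F \<longleftrightarrow>
     F \<noteq> bot \<and> (\<forall>P. eventually P F \<or> eventually (\<lambda>n. \<not> P n) F) \<and> F \<le> cofinite"

definition betaNstar :: "nat filter set" where
  "betaNstar = {F. free_ultrafilter F}"

text \<open>Stone--Cech topology on \<open>\<beta>\<nat>*\<close>: basic open sets \<open>{F. A \<in> F}\<close>\<close>
definition stone_topology :: "nat filter topology" where
  "stone_topology = subtopology
     (topology_generated_by (range (\<lambda>A. {F. eventually (\<lambda>n. n \<in> A) F}))) betaNstar"

definition Omega_topology :: "(nat filter \<times> real) topology" where
  "Omega_topology = prod_topology stone_topology (top_of_set {-1..})"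

definition borel_of :: "'a topology \<Rightarrow> 'a measure" where
  "borel_of X = sigma (topspace X) {U. openin X U}"

definition F_lim :: "nat filter \<Rightarrow> (nat \<Rightarrow> real) \<Rightarrow> real" where
  "F_lim F x = Lim F x"

definition mu_alpha_F :: "nat filter \<Rightarrow> real \<Rightarrow> nat set \<Rightarrow> real" where
  "mu_alpha_F F \<alpha> E = F_lim F (wratio \<alpha> E)"

end

theory Submission
  imports Defs
begin


lemma ex_ultra_le:
  fixes G :: "'a filter"
  assumes G: "G \<noteq> bot"
  shows "\<exists>U\<le>G. U \<noteq> bot \<and> (\<forall>P. eventually P U \<or> eventually (\<lambda>x. \<not> P x) U)"
proof -
  let ?R = "{(b, a). a \<noteq> bot \<and> a \<le> b \<and> b \<le> G}"
  have FR: "Field ?R = {H. H \<noteq> bot \<and> H \<le> G}"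
    by (auto simp: Field_def bot_unique)
  have "\<exists>m\<in>Field ?R. \<forall>a\<in>Field ?R. (m, a) \<in> ?R \<longrightarrow> a = m"
  proof (rule Zorns_po_lemma)
    show "Partial_order ?R"
      by (auto simp: partial_order_on_def preorder_on_def
          antisym_def refl_on_def trans_def Field_def bot_unique)
    show "\<exists>u\<in>Field ?R. \<forall>a\<in>C. (a, u) \<in> ?R" if C: "C \<in> Chains ?R" for C
    proof (cases "C = {}")
      case True
      then show ?thesis using G FR by auto
    next
      case False
      have nb: "bot \<notin> C" using C by (auto simp: Chains_def)
      have "Inf C = bot \<longleftrightarrow> (\<exists>x\<in>C. x = bot)"
        unfolding trivial_limit_def using C False
        by (intro eventually_Inf_base) (auto simp: Chains_def)
      then have I1: "Inf C \<noteq> bot" using nb by auto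
      from False obtain y where "y \<in> C" by auto
      then have I2: "Inf C \<le> G" using C by (auto intro!: Inf_lower2[of y] simp: Chains_def)
      have "(a, Inf C) \<in> ?R" if "a \<in> C" for a
      proof -
        from C that have "(a,a) \<in> ?R" unfolding Chains_def by blast
        then show ?thesis using I1 I2 that by (simp add: Inf_lower)
      qed
      moreover have "Inf C \<in> Field ?R" using I1 I2 FR by simp
      ultimately show ?thesis by (intro bexI[of _ "Inf C"]) auto
    qed
  qed
  then obtain U where U1: "U \<in> Field ?R" and U2: "\<forall>a\<in>Field ?R. (U, a) \<in> ?R \<longrightarrow> a = U"
    by blast
  have U: "U \<noteq> bot" "U \<le> G" using U1 FR by auto
  have mx: "H = U" if "H \<noteq> bot" "H \<le> U" for H
  proof -
    have "H \<in> Field ?R" using that U FR by auto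
    moreover have "(U, H) \<in> ?R" using that U by auto
    ultimately show ?thesis using U2 by blast
  qed
  have "eventually P U \<or> eventually (\<lambda>x. \<not> P x) U" for P
  proof (rule disjCI)
    assume "\<not> eventually (\<lambda>x. \<not> P x) U"
    then have "inf U (principal {x. P x}) \<noteq> bot"
      by (simp add: trivial_limit_def eventually_inf_principal not_eventually)
    then have "inf U (principal {x. P x}) = U" by (rule mx) simp
    moreover have "eventually P (inf U (principal {x. P x}))"
      by (simp add: eventually_inf_principal)
    ultimately show "eventually P U" by simp
  qed
  then show ?thesis using U by blast
qed

lemma ex_free_ultra:
  assumes "infinite (S :: nat set)"
  shows "\<exists>F. free_ultrafilter F \<and> eventually (\<lambda>n. n \<in> S) F"
proof -
  have "inf cofinite (principal S) \<noteq> bot"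
    using assms by (simp add: trivial_limit_def eventually_inf_principal eventually_cofinite)
  from ex_ultra_le[OF this] obtain U where U: "U \<le> inf cofinite (principal S)" "U \<noteq> bot"
    "\<And>P. eventually P U \<or> eventually (\<lambda>x. \<not> P x) U" by blast
  have "eventually (\<lambda>n. n \<in> S) U"
    using U(1) by (metis eventually_principal inf.boundedE le_filter_def)
  then show ?thesis using U unfolding free_ultrafilter_def
    by (meson dual_order.trans inf.boundedE)
qed

lemma fu_tendsto:
  fixes g :: "nat \<Rightarrow> real"
  assumes F: "free_ultrafilter F" and b: "\<And>n. a \<le> g n \<and> g n \<le> b"
  shows "(g \<longlongrightarrow> Lim F g) F" and "a \<le> Lim F g" and "Lim F g \<le> b"
proof -
  have Fb: "F \<noteq> bot" and U: "\<And>P. eventually P F \<or> eventually (\<lambda>x. \<not> P x) F"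
    using F by (auto simp: free_ultrafilter_def)
  have "compact {a..b}" by simp
  moreover have "filtermap g F \<noteq> bot" using Fb by (simp add: filtermap_bot_iff)
  moreover have "eventually (\<lambda>x. x \<in> {a..b}) (filtermap g F)"
    using b by (simp add: eventually_filtermap)
  ultimately obtain L where L: "L \<in> {a..b}" "inf (nhds L) (filtermap g F) \<noteq> bot"
    unfolding compact_filter by blast
  have lim: "(g \<longlongrightarrow> L) F"
    unfolding tendsto_def
  proof (intro allI impI)
    fix S :: "real set" assume S: "open S" "L \<in> S"
    show "eventually (\<lambda>x. g x \<in> S) F"
    proof (rule ccontr)
      assume "\<not> eventually (\<lambda>x. g x \<in> S) F"
      then have "eventually (\<lambda>x. g x \<notin> S) F" using U by blast
      then have e1: "eventually (\<lambda>y. y \<notin> S) (filtermap g F)" by (simp add: eventually_filtermap)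
      have e2: "eventually (\<lambda>y. y \<in> S) (nhds L)" using S by (rule eventually_nhds_in_open)
      have "eventually (\<lambda>y. False) (inf (nhds L) (filtermap g F))"
        unfolding eventually_inf using e1 e2 by (intro exI[of _ "\<lambda>y. y \<in> S"] exI[of _ "\<lambda>y. y \<notin> S"]) simp
      then show False using L(2) by (simp add: trivial_limit_def)
    qed
  qed
  have "Lim F g = L" using tendsto_Lim[OF Fb lim] .
  then show "(g \<longlongrightarrow> Lim F g) F" "a \<le> Lim F g" "Lim F g \<le> b" using lim L by auto
qed



lemma powr_mvt:
  fixes x y s :: real
  assumes "0 < y" "y < x"
  shows "\<exists>z. y < z \<and> z < x \<and> x powr s - y powr s = (x - y) * (s * z powr (s - 1))"
proof -
  have D: "((\<lambda>z. z powr s) has_real_derivative s * z powr (s - 1)) (at z)" if "z > 0" for z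
    using has_real_derivative_powr[OF that] .
  have "continuous_on {y..x} (\<lambda>z. z powr s)"
    using assms by (intro continuous_at_imp_continuous_on ballI DERIV_isCont[OF D]) auto
  moreover have "(\<lambda>z. z powr s) differentiable (at z)" if "y < z" for z
    using D[of z] assms that
    by (meson differentiableI has_field_derivative_imp_has_derivative less_trans)
  ultimately obtain l z where z: "y < z" "z < x" "DERIV (\<lambda>z. z powr s) z :> l"
    "x powr s - y powr s = (x - y) * l"
    using MVT[OF assms(2)] by blast
  have "l = s * z powr (s - 1)" using DERIV_unique[OF z(3) D] z assms by auto
  then show ?thesis using z by blast
qed

lemma powr_concave_diff:
  fixes x y s :: real
  assumes "0 < y" "y < x" "0 \<le> s" "s \<le> 1"
  shows "s * x powr (s - 1) * (x - y) \<le> x powr s - y powr s"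
proof -
  obtain z where z: "y < z" "z < x" "x powr s - y powr s = (x - y) * (s * z powr (s - 1))"
    using powr_mvt[OF assms(1,2)] by blast
  have "x powr (s - 1) \<le> z powr (s - 1)"
    using z assms by (intro powr_mono2') auto
  then have "s * x powr (s - 1) * (x - y) \<le> s * z powr (s - 1) * (x - y)"
    using assms by (intro mult_right_mono mult_left_mono) auto
  then show ?thesis using z by (simp add: algebra_simps)
qed

lemma powr_convex_diff:
  fixes x y s :: real
  assumes "0 < y" "y < x" "1 \<le> s"
  shows "x powr s - y powr s \<le> s * x powr (s - 1) * (x - y)"
proof -
  obtain z where z: "y < z" "z < x" "x powr s - y powr s = (x - y) * (s * z powr (s - 1))"
    using powr_mvt[OF assms(1,2)] by blast
  have "z powr (s - 1) \<le> x powr (s - 1)"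
    using z assms by (intro powr_mono2) auto
  then have "s * z powr (s - 1) * (x - y) \<le> s * x powr (s - 1) * (x - y)"
    using assms by (intro mult_right_mono mult_left_mono) auto
  then show ?thesis using z by (simp add: algebra_simps)
qed



definition asum :: "real \<Rightarrow> nat \<Rightarrow> real" where
  "asum \<alpha> n = (\<Sum>k=1..n. real k powr \<alpha>)"

lemma asum_Suc: "asum \<alpha> (Suc n) = asum \<alpha> n + real (Suc n) powr \<alpha>"
  by (simp add: asum_def)

lemma asum_nonneg: "0 \<le> asum \<alpha> n"
  by (simp add: asum_def sum_nonneg)

lemma wcnt_Npos: "wcnt \<alpha> Npos n = asum \<alpha> n"
proof -
  have "Npos \<inter> {1..n} = {1..n}" by (auto simp: Npos_def)
  then show ?thesis by (simp add: wcnt_def asum_def)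
qed

lemma asum_ge_ln:
  assumes "\<alpha> \<ge> -1"
  shows "ln (real n + 1) \<le> asum \<alpha> n"
proof -
  have "ln (real n + 1) \<le> harm n" by (rule ln_le_harm)
  also have "harm n = (\<Sum>k=1..n. real k powr (-1))"
    unfolding harm_def by (intro sum.cong) (auto simp: powr_minus)
  also have "\<dots> \<le> asum \<alpha> n" unfolding asum_def
    using assms by (intro sum_mono powr_mono) auto
  finally show ?thesis .
qed

lemma asum_pos: "\<alpha> \<ge> -1 \<Longrightarrow> n \<ge> 1 \<Longrightarrow> 0 < asum \<alpha> n"
proof -
  assume a: "\<alpha> \<ge> -1" "n \<ge> 1"
  have "0 < ln (real n + 1)" using a by simp
  then show ?thesis using asum_ge_ln[OF a(1), of n] by linarith
qed

lemma asum_tendsto: "\<alpha> \<ge> -1 \<Longrightarrow> filterlim (asum \<alpha>) at_top sequentially"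
proof -
  assume a: "\<alpha> \<ge> -1"
  have "filterlim (\<lambda>n. ln (real n + 1)) at_top sequentially"
    by real_asymp
  then show ?thesis
    by (rule filterlim_at_top_mono) (use asum_ge_ln[OF a] in auto)
qed

lemma asum_upper_neg:
  assumes "-1 < \<alpha>" "\<alpha> < 0"
  shows "asum \<alpha> n \<le> real n powr (\<alpha> + 1) / (\<alpha> + 1)"
proof (induction n)
  case 0
  then show ?case by (simp add: asum_def)
next
  case (Suc n)
  show ?case
  proof (cases "n = 0")
    case True
    then show ?thesis using assms by (simp add: asum_def field_simps)
  next
    case False
    have "(\<alpha>+1) * real (Suc n) powr (\<alpha> + 1 - 1) * (real (Suc n) - real n)
        \<le> real (Suc n) powr (\<alpha>+1) - real n powr (\<alpha>+1)"
      using False assms by (intro powr_concave_diff) auto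
    then have "real (Suc n) powr \<alpha> \<le> (real (Suc n) powr (\<alpha>+1) - real n powr (\<alpha>+1)) / (\<alpha>+1)"
      using assms by (simp add: field_simps)
    then show ?thesis using Suc.IH assms by (simp add: asum_Suc diff_divide_distrib)
  qed
qed

lemma asum_lower_pos:
  assumes "0 \<le> \<alpha>"
  shows "real n powr (\<alpha> + 1) \<le> (\<alpha> + 1) * asum \<alpha> n"
proof (induction n)
  case 0
  then show ?case by (simp add: asum_def)
next
  case (Suc n)
  show ?case
  proof (cases "n = 0")
    case True
    then show ?thesis using assms by (simp add: asum_def)
  next
    case False
    have "real (Suc n) powr (\<alpha>+1) - real n powr (\<alpha>+1)
        \<le> (\<alpha>+1) * real (Suc n) powr (\<alpha> + 1 - 1) * (real (Suc n) - real n)"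
      using False assms by (intro powr_convex_diff) auto
    then show ?thesis using Suc.IH assms by (simp add: asum_Suc algebra_simps)
  qed
qed

lemma pow_le_asum:
  assumes "-1 \<le> \<alpha>" "1 \<le> n"
  shows "real n powr (\<alpha> + 1) \<le> (\<alpha> + 2) * asum \<alpha> n"
proof (cases "\<alpha> \<le> 0")
  case True
  have "real n powr (\<alpha> + 1) = (\<Sum>k=1..n. real n powr \<alpha>)"
    using assms by (simp add: powr_add)
  also have "\<dots> \<le> asum \<alpha> n" unfolding asum_def
    using True by (intro sum_mono powr_mono2') auto
  also have "\<dots> \<le> (\<alpha> + 2) * asum \<alpha> n"
    using assms asum_nonneg[of \<alpha> n] by (simp add: mult_le_cancel_right1)
  finally show ?thesis .
next
  case False
  then have "real n powr (\<alpha> + 1) \<le> (\<alpha> + 1) * asum \<alpha> n" by (intro asum_lower_pos) auto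
  also have "\<dots> \<le> (\<alpha> + 2) * asum \<alpha> n"
    using asum_nonneg[of \<alpha> n] by (intro mult_right_mono) auto
  finally show ?thesis .
qed

definition Cst :: "real \<Rightarrow> real" where "Cst \<alpha> = 1 + 2 / (\<alpha> + 1)"

lemma Cst_ge1: "-1 < \<alpha> \<Longrightarrow> 1 \<le> Cst \<alpha>"
  by (simp add: Cst_def)

lemma asum_le_Cst:
  assumes "-1 < \<alpha>" "1 \<le> n"
  shows "asum \<alpha> n \<le> Cst \<alpha> * real n * real (Suc n) powr \<alpha>"
proof (cases "0 \<le> \<alpha>")
  case True
  have "asum \<alpha> n \<le> (\<Sum>k=1..n. real (Suc n) powr \<alpha>)" unfolding asum_def
    using True by (intro sum_mono powr_mono2) auto
  also have "\<dots> = real n * real (Suc n) powr \<alpha>" by simp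
  also have "\<dots> \<le> Cst \<alpha> * real n * real (Suc n) powr \<alpha>"
    using Cst_ge1[OF assms(1)] mult_right_mono[of 1 "Cst \<alpha>" "real n * real (Suc n) powr \<alpha>"]
    by (simp add: mult.assoc)
  finally show ?thesis .
next
  case False
  have h1: "asum \<alpha> n \<le> real n powr (\<alpha> + 1) / (\<alpha> + 1)"
    using False assms by (intro asum_upper_neg) auto
  have "(2 * real n) powr \<alpha> \<le> real (Suc n) powr \<alpha>"
    using False assms by (intro powr_mono2') auto
  moreover have "(2 * real n) powr \<alpha> = 2 powr \<alpha> * real n powr \<alpha>"
    by (simp add: powr_mult)
  moreover have "2 powr (-1) \<le> 2 powr \<alpha>" using assms by (intro powr_mono) auto
  moreover have "(1/2) * real n powr \<alpha> \<le> 2 powr \<alpha> * real n powr \<alpha>"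
    using \<open>2 powr (-1) \<le> 2 powr \<alpha>\<close> by (intro mult_right_mono) (auto simp: powr_minus_divide)
  ultimately have h2: "real n powr \<alpha> \<le> 2 * real (Suc n) powr \<alpha>"
    by linarith
  have "real n powr (\<alpha> + 1) / (\<alpha> + 1) = real n * real n powr \<alpha> / (\<alpha> + 1)"
    using assms by (simp add: powr_add)
  also have "\<dots> \<le> real n * (2 * real (Suc n) powr \<alpha>) / (\<alpha> + 1)"
    using h2 assms by (intro divide_right_mono mult_left_mono) auto
  also have "\<dots> = (2 / (\<alpha> + 1)) * real n * real (Suc n) powr \<alpha>" by simp
  also have "\<dots> \<le> Cst \<alpha> * real n * real (Suc n) powr \<alpha>"
    unfolding Cst_def by (intro mult_right_mono) auto
  finally show ?thesis using h1 by linarith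
qed

definition bsum :: "real \<Rightarrow> nat \<Rightarrow> real" where
  "bsum \<alpha> n = (\<Sum>k=1..n. real k powr \<alpha> * (ln (real n) - ln (real k)))"

lemma bsum_Suc: "bsum \<alpha> (Suc n) = bsum \<alpha> n + (ln (real (Suc n)) - ln (real n)) * asum \<alpha> n"
proof -
  have "bsum \<alpha> (Suc n) = (\<Sum>k=1..n. real k powr \<alpha> * (ln (real (Suc n)) - ln (real k)))"
    by (simp add: bsum_def)
  also have "\<dots> = (\<Sum>k=1..n. real k powr \<alpha> * (ln (real n) - ln (real k))
      + (ln (real (Suc n)) - ln (real n)) * real k powr \<alpha>)"
    by (intro sum.cong) (auto simp: algebra_simps)
  also have "\<dots> = bsum \<alpha> n + (ln (real (Suc n)) - ln (real n)) * asum \<alpha> n"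
    by (simp add: sum.distrib bsum_def asum_def sum_distrib_left)
  finally show ?thesis .
qed

lemma bsum_le:
  assumes "-1 < \<alpha>"
  shows "bsum \<alpha> n \<le> Cst \<alpha> * asum \<alpha> n"
proof (induction n)
  case 0
  then show ?case by (simp add: bsum_def asum_def)
next
  case (Suc n)
  show ?case
  proof (cases "n = 0")
    case True
    then show ?thesis using Cst_ge1[OF assms] by (simp add: bsum_def asum_def)
  next
    case False
    have d: "ln (real (Suc n)) - ln (real n) \<le> 1 / real n"
    proof -
      have e: "1 + 1 / real n = real (Suc n) / real n" using False by (simp add: field_simps)
      have "ln (real (Suc n)) - ln (real n) = ln (1 + 1 / real n)"
        unfolding e using False by (subst ln_div) auto
      also have "\<dots> \<le> 1 / real n" by (rule ln_add_one_self_le_self) simp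
      finally show ?thesis .
    qed
    have d0: "0 \<le> ln (real (Suc n)) - ln (real n)" using False by simp
    have "(ln (real (Suc n)) - ln (real n)) * asum \<alpha> n \<le> (1 / real n) * asum \<alpha> n"
      using d asum_nonneg[of \<alpha> n] by (intro mult_right_mono) auto
    also have "\<dots> \<le> (1 / real n) * (Cst \<alpha> * real n * real (Suc n) powr \<alpha>)"
      using asum_le_Cst[OF assms, of n] False by (intro mult_left_mono) auto
    also have "\<dots> = Cst \<alpha> * real (Suc n) powr \<alpha>" using False by simp
    finally show ?thesis using Suc.IH by (simp add: bsum_Suc asum_Suc algebra_simps)
  qed
qed



lemma ratio_perturb:
  fixes w h :: "nat \<Rightarrow> real"
  assumes I: "finite I" "J \<subseteq> I" "I \<noteq> {}"
    and w: "\<And>k. k \<in> I \<Longrightarrow> 0 < w k" and h: "\<And>k. k \<in> I \<Longrightarrow> 0 \<le> h k \<and> h k \<le> 1"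
    and D: "(\<Sum>k\<in>I. w k * (1 - h k)) \<le> \<eta> * (\<Sum>k\<in>I. w k)"
    and eta: "0 \<le> \<eta>" "\<eta> \<le> 1/2"
  shows "\<bar>(\<Sum>k\<in>J. w k * h k) / (\<Sum>k\<in>I. w k * h k) - (\<Sum>k\<in>J. w k) / (\<Sum>k\<in>I. w k)\<bar> \<le> 4 * \<eta>"
proof -
  define W where "W = (\<Sum>k\<in>I. w k)"
  define Dd where "Dd = (\<Sum>k\<in>I. w k * (1 - h k))"
  define S where "S = (\<Sum>k\<in>J. w k)"
  define d where "d = (\<Sum>k\<in>J. w k * (1 - h k))"
  have fJ: "finite J" using I finite_subset by blast
  have Wp: "0 < W" unfolding W_def using I w by (intro sum_pos) auto
  have HI: "(\<Sum>k\<in>I. w k * h k) = W - Dd"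
    unfolding W_def Dd_def by (simp add: algebra_simps sum_subtractf)
  have HJ: "(\<Sum>k\<in>J. w k * h k) = S - d"
    unfolding S_def d_def by (simp add: algebra_simps sum_subtractf)
  have kJ: "k \<in> I" if "k \<in> J" for k using I(2) that by blast
  have d0: "0 \<le> d" unfolding d_def using kJ w h
    by (intro sum_nonneg) (meson diff_ge_0_iff_ge less_imp_le mult_nonneg_nonneg)
  have wge: "0 \<le> w k" if "k \<in> I" for k using w[OF that] by simp
  have dD: "d \<le> Dd" unfolding d_def Dd_def using I wge h
    by (intro sum_mono2) (auto intro!: mult_nonneg_nonneg)
  have S0: "0 \<le> S" unfolding S_def using I w by (intro sum_nonneg) (auto intro: less_imp_le)
  have SW: "S \<le> W" unfolding S_def W_def using I w by (intro sum_mono2) (auto intro: less_imp_le)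
  have DW: "Dd \<le> \<eta> * W" using D unfolding Dd_def W_def .
  have "\<eta> * W \<le> (1/2) * W" using eta Wp by (intro mult_right_mono) auto
  then have Hp: "W / 2 \<le> W - Dd" using DW by linarith
  have Hpos: "0 < W - Dd" using Hp Wp by linarith
  have eq: "(S - d) / (W - Dd) - S / W = (S * Dd - W * d) / ((W - Dd) * W)"
    using Hpos Wp by (simp add: field_simps)
  have n1: "\<bar>S * Dd - W * d\<bar> \<le> 2 * \<eta> * (W * W)"
  proof -
    have "S * Dd \<le> W * (\<eta> * W)" using S0 SW DW d0 dD by (intro mult_mono) auto
    moreover have "W * d \<le> W * (\<eta> * W)" using dD DW Wp by (intro mult_left_mono) auto
    moreover have "0 \<le> S * Dd" using S0 d0 dD by simp
    moreover have "0 \<le> W * d" using Wp d0 by simp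
    ultimately show ?thesis by (simp add: abs_le_iff algebra_simps)
  qed
  have "\<bar>(S * Dd - W * d) / ((W - Dd) * W)\<bar> = \<bar>S * Dd - W * d\<bar> / ((W - Dd) * W)"
    using Hpos Wp by (simp add: abs_divide)
  also have "\<dots> \<le> (2 * \<eta> * (W * W)) / ((W / 2) * W)"
    using n1 Hp Wp eta by (intro frac_le mult_right_mono) auto
  also have "\<dots> = 4 * \<eta>" using Wp by (simp add: field_simps)
  finally show ?thesis unfolding HI HJ eq W_def[symmetric] S_def[symmetric] .
qed

lemma wratio_lip:
  assumes a: "-1 < \<alpha>" "\<alpha> \<le> \<beta>" "(\<beta> - \<alpha>) * Cst \<alpha> \<le> 1/2"
  shows "\<bar>wratio \<beta> E n - wratio \<alpha> E n\<bar> \<le> 4 * ((\<beta> - \<alpha>) * Cst \<alpha>)"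
proof (cases "n = 0")
  case True
  then show ?thesis using a Cst_ge1[OF a(1)] by (simp add: wratio_def wcnt_def)
next
  case False
  define \<delta> where "\<delta> = \<beta> - \<alpha>"
  have dl: "0 \<le> \<delta>" using a by (simp add: \<delta>_def)
  define w where "w k = real k powr \<alpha>" for k :: nat
  define h where "h k = (real k / real n) powr \<delta>" for k :: nat
  let ?I = "{1..n}" and ?J = "E \<inter> {1..n}"
  have np: "0 < real n" using False by simp
  have kb: "real k powr \<beta> = real n powr \<delta> * (w k * h k)" if "k \<in> ?I" for k
  proof -
    have "real k powr \<beta> = real k powr \<alpha> * real k powr \<delta>"
      by (simp add: \<delta>_def powr_add[symmetric])
    moreover have "h k = real k powr \<delta> / real n powr \<delta>"
      unfolding h_def using that np by (simp add: powr_divide)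
    ultimately show ?thesis using np by (simp add: w_def)
  qed
  have NI: "Npos \<inter> {1..n} = ?I" by (auto simp: Npos_def)
  have r1: "wratio \<beta> E n = (\<Sum>k\<in>?J. w k * h k) / (\<Sum>k\<in>?I. w k * h k)"
  proof -
    have "wcnt \<beta> E n = real n powr \<delta> * (\<Sum>k\<in>?J. w k * h k)"
      unfolding wcnt_def sum_distrib_left using kb by (intro sum.cong) auto
    moreover have "wcnt \<beta> Npos n = real n powr \<delta> * (\<Sum>k\<in>?I. w k * h k)"
      unfolding wcnt_def NI sum_distrib_left using kb by (intro sum.cong) auto
    ultimately show ?thesis using np unfolding wratio_def by simp
  qed
  have r2: "wratio \<alpha> E n = (\<Sum>k\<in>?J. w k) / (\<Sum>k\<in>?I. w k)"
    unfolding wratio_def wcnt_def NI w_def ..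
  have hk: "1 - h k \<le> \<delta> * (ln (real n) - ln (real k))" if "k \<in> ?I" for k
  proof -
    have "h k = exp (\<delta> * ln (real k / real n))"
      unfolding h_def using that np by (simp add: powr_def)
    moreover have "1 + \<delta> * ln (real k / real n) \<le> exp (\<delta> * ln (real k / real n))"
      by (rule exp_ge_add_one_self)
    moreover have "ln (real k / real n) = ln (real k) - ln (real n)"
      using that np by (simp add: ln_div)
    ultimately show ?thesis by (simp add: algebra_simps)
  qed
  have D: "(\<Sum>k\<in>?I. w k * (1 - h k)) \<le> (\<delta> * Cst \<alpha>) * (\<Sum>k\<in>?I. w k)"
  proof -
    have "(\<Sum>k\<in>?I. w k * (1 - h k)) \<le> (\<Sum>k\<in>?I. w k * (\<delta> * (ln (real n) - ln (real k))))"
      using hk by (intro sum_mono mult_left_mono) (auto simp: w_def)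
    also have "\<dots> = \<delta> * bsum \<alpha> n"
      unfolding bsum_def w_def sum_distrib_left by (intro sum.cong) auto
    also have "\<dots> \<le> \<delta> * (Cst \<alpha> * asum \<alpha> n)"
      using bsum_le[OF a(1)] dl by (intro mult_left_mono) auto
    also have "\<dots> = (\<delta> * Cst \<alpha>) * (\<Sum>k\<in>?I. w k)"
      by (simp add: asum_def w_def)
    finally show ?thesis .
  qed
  have hb: "0 \<le> h k \<and> h k \<le> 1" if "k \<in> ?I" for k
    unfolding h_def using that np dl by (auto intro!: powr_le1)
  have "\<bar>(\<Sum>k\<in>?J. w k * h k) / (\<Sum>k\<in>?I. w k * h k) - (\<Sum>k\<in>?J. w k) / (\<Sum>k\<in>?I. w k)\<bar>
      \<le> 4 * (\<delta> * Cst \<alpha>)"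
    using False hb D dl a Cst_ge1[OF a(1)]
    by (intro ratio_perturb) (auto simp: w_def \<delta>_def)
  then show ?thesis using r1 r2 by (simp add: \<delta>_def)
qed



lemma sbp:
  fixes c w :: "nat \<Rightarrow> real"
  assumes "c 0 = 0"
  shows "(\<Sum>k=1..n. (c k - c (k - 1)) * w k) = c n * w n + (\<Sum>k=1..<n. c k * (w k - w (Suc k)))"
proof (induction n)
  case 0
  then show ?case using assms by simp
next
  case (Suc n)
  show ?case
  proof (cases "n = 0")
    case True
    then show ?thesis using assms by simp
  next
    case False
    have "{1..<Suc n} = insert n {1..<n}" using False by auto
    then have "(\<Sum>k=1..<Suc n. c k * (w k - w (Suc k))) = c n * (w n - w (Suc n)) + (\<Sum>k=1..<n. c k * (w k - w (Suc k)))"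
      by simp
    then show ?thesis using Suc.IH by (simp add: algebra_simps)
  qed
qed

lemma cnt_Suc: "real (cnt E (Suc k)) = real (cnt E k) + (if Suc k \<in> E then 1 else 0)"
proof -
  have "{1..Suc k} = insert (Suc k) {1..k}" by (rule atLeastAtMostSuc_conv) simp
  then show ?thesis unfolding cnt_def by (simp add: Int_insert_right card_insert_if)
qed

lemma cnt_0: "cnt E 0 = 0" by (simp add: cnt_def)

lemma T_identity:
  "(\<Sum>k=1..<n. real k * (real (Suc k) powr \<alpha> - real k powr \<alpha>)) = real n powr (\<alpha> + 1) - asum \<alpha> n"
proof (induction n)
  case 0
  then show ?case by (simp add: asum_def)
next
  case (Suc n)
  show ?case
  proof (cases "n = 0")
    case True
    then show ?thesis by (simp add: asum_def)
  next
    case False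
    have "{1..<Suc n} = insert n {1..<n}" using False by auto
    then have s: "(\<Sum>k=1..<Suc n. real k * (real (Suc k) powr \<alpha> - real k powr \<alpha>))
       = real n * (real (Suc n) powr \<alpha> - real n powr \<alpha>) + (\<Sum>k=1..<n. real k * (real (Suc k) powr \<alpha> - real k powr \<alpha>))"
      by simp
    have p1: "real (Suc n) powr (\<alpha> + 1) = real (Suc n) * real (Suc n) powr \<alpha>"
      by (simp add: powr_add)
    have p2: "real n powr (\<alpha> + 1) = real n * real n powr \<alpha>"
      using False by (simp add: powr_add)
    show ?thesis unfolding s Suc.IH asum_Suc p1 p2 by (simp add: ring_distribs)
  qed
qed

lemma T_bound:
  "(\<Sum>k=1..<n. real k * \<bar>real k powr \<alpha> - real (Suc k) powr \<alpha>\<bar>) \<le> real n powr (\<alpha> + 1) + asum \<alpha> n"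
proof (cases "0 \<le> \<alpha>")
  case True
  have "(\<Sum>k=1..<n. real k * \<bar>real k powr \<alpha> - real (Suc k) powr \<alpha>\<bar>)
      = (\<Sum>k=1..<n. real k * (real (Suc k) powr \<alpha> - real k powr \<alpha>))"
  proof (intro sum.cong refl)
    fix k assume "k \<in> {1..<n}"
    then have "real k powr \<alpha> \<le> real (Suc k) powr \<alpha>" using True by (intro powr_mono2) auto
    then show "real k * \<bar>real k powr \<alpha> - real (Suc k) powr \<alpha>\<bar> = real k * (real (Suc k) powr \<alpha> - real k powr \<alpha>)"
      by simp
  qed
  also have "\<dots> \<le> real n powr (\<alpha> + 1) + asum \<alpha> n" unfolding T_identity using asum_nonneg[of \<alpha> n] by simp
  finally show ?thesis .
next
  case False
  have "(\<Sum>k=1..<n. real k * \<bar>real k powr \<alpha> - real (Suc k) powr \<alpha>\<bar>)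
      = - (\<Sum>k=1..<n. real k * (real (Suc k) powr \<alpha> - real k powr \<alpha>))"
    unfolding sum_negf[symmetric]
  proof (intro sum.cong refl)
    fix k assume "k \<in> {1..<n}"
    then have "real (Suc k) powr \<alpha> \<le> real k powr \<alpha>" using False by (intro powr_mono2') auto
    then show "real k * \<bar>real k powr \<alpha> - real (Suc k) powr \<alpha>\<bar> = - (real k * (real (Suc k) powr \<alpha> - real k powr \<alpha>))"
      by (simp add: abs_of_nonneg right_diff_distrib)
  qed
  also have "\<dots> \<le> real n powr (\<alpha> + 1) + asum \<alpha> n" unfolding T_identity by simp
  finally show ?thesis .
qed

lemma wcnt_minus:
  "wcnt \<alpha> E n - L * asum \<alpha> n
     = (real (cnt E n) - L * real n) * real n powr \<alpha>
       + (\<Sum>k=1..<n. (real (cnt E k) - L * real k) * (real k powr \<alpha> - real (Suc k) powr \<alpha>))"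
proof -
  define e where "e k = real (cnt E k) - L * real k" for k
  have e0: "e 0 = 0" by (simp add: e_def cnt_0)
  have de: "e k - e (k - 1) = (if k \<in> E then 1 else 0) - L" if k1: "k \<ge> 1" for k
  proof -
    obtain j where j: "k = Suc j" using k1 by (cases k) auto
    show ?thesis unfolding e_def j using cnt_Suc[of E j] by (simp add: algebra_simps)
  qed
  have "wcnt \<alpha> E n = (\<Sum>k=1..n. if k \<in> E then real k powr \<alpha> else 0)"
    unfolding wcnt_def by (subst Int_commute) (simp add: sum.inter_restrict)
  also have "\<dots> = (\<Sum>k=1..n. (if k \<in> E then 1 else 0) * real k powr \<alpha>)"
    by (intro sum.cong) auto
  finally have "wcnt \<alpha> E n - L * asum \<alpha> n = (\<Sum>k=1..n. (if k \<in> E then 1 else 0) * real k powr \<alpha>) - (\<Sum>k=1..n. L * real k powr \<alpha>)"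
    by (simp add: asum_def sum_distrib_left)
  also have "\<dots> = (\<Sum>k=1..n. ((if k \<in> E then 1 else 0) - L) * real k powr \<alpha>)"
    by (simp add: sum_subtractf[symmetric] left_diff_distrib)
  also have "\<dots> = (\<Sum>k=1..n. (e k - e (k - 1)) * real k powr \<alpha>)"
    using de by (intro sum.cong) auto
  also have "\<dots> = e n * real n powr \<alpha> + (\<Sum>k=1..<n. e k * (real k powr \<alpha> - real (Suc k) powr \<alpha>))"
    using sbp[of e, OF e0] by simp
  finally show ?thesis unfolding e_def .
qed



lemma wratio_density:
  assumes a: "-1 \<le> \<alpha>" and d: "has_density E L"
  shows "wratio \<alpha> E \<longlonglongrightarrow> L"
proof (rule LIMSEQ_I)
  fix r :: real assume r: "0 < r"
  define c where "c = 2 * \<alpha> + 5"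
  have c: "3 \<le> c" using a by (simp add: c_def)
  define \<epsilon> where "\<epsilon> = r / (4 * c)"
  have ep: "0 < \<epsilon>" using r c by (simp add: \<epsilon>_def)
  define e where "e k = real (cnt E k) - L * real k" for k
  define \<Delta> where "\<Delta> k = real k powr \<alpha> - real (Suc k) powr \<alpha>" for k
  obtain K0 where K0: "\<And>k. k \<ge> K0 \<Longrightarrow> norm (real (cnt E k) / real k - L) < \<epsilon>"
    using LIMSEQ_D[OF d[unfolded has_density_def] ep] by blast
  define K where "K = max K0 1"
  have eK: "\<bar>e k\<bar> \<le> \<epsilon> * real k" if "k \<ge> K" for k
  proof -
    have k1: "real k > 0" "k \<ge> K0" using that by (auto simp: K_def)
    have "e k = real k * (real (cnt E k) / real k - L)" using k1 by (simp add: e_def field_simps)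
    then have "\<bar>e k\<bar> = real k * \<bar>real (cnt E k) / real k - L\<bar>" using k1 by (simp add: abs_mult)
    also have "\<dots> \<le> real k * \<epsilon>" using K0[OF k1(2)] k1 by (intro mult_left_mono) auto
    finally show ?thesis by (simp add: mult.commute)
  qed
  define M where "M = (\<Sum>k=1..<K. \<bar>e k\<bar> * \<bar>\<Delta> k\<bar>)"
  have M0: "0 \<le> M" unfolding M_def by (intro sum_nonneg) auto
  have "eventually (\<lambda>n. 2 * M / r + 1 \<le> asum \<alpha> n) sequentially"
    using asum_tendsto[OF a] by (simp add: filterlim_at_top)
  then obtain N where N: "\<And>n. n \<ge> N \<Longrightarrow> 2 * M / r + 1 \<le> asum \<alpha> n"
    unfolding eventually_sequentially by blast
  show "\<exists>no. \<forall>n\<ge>no. norm (wratio \<alpha> E n - L) < r"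
  proof (intro exI allI impI)
    fix n assume n: "max N K \<le> n"
    have nK: "K \<le> n" and n1: "1 \<le> n" using n by (auto simp: K_def)
    define A where "A = asum \<alpha> n"
    have Apos: "0 < A" unfolding A_def using asum_pos[OF a n1] .
    have AN: "2 * M / r + 1 \<le> A" unfolding A_def using N n by auto
    have split: "(\<Sum>k=1..<n. \<bar>e k\<bar> * \<bar>\<Delta> k\<bar>) = M + (\<Sum>k=K..<n. \<bar>e k\<bar> * \<bar>\<Delta> k\<bar>)"
      unfolding M_def using nK by (intro sum.atLeastLessThan_concat[symmetric]) (auto simp: K_def)
    have s2: "(\<Sum>k=K..<n. \<bar>e k\<bar> * \<bar>\<Delta> k\<bar>) \<le> (\<Sum>k=K..<n. \<epsilon> * (real k * \<bar>\<Delta> k\<bar>))"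
      using eK by (intro sum_mono) (auto simp: mult.assoc[symmetric] intro!: mult_right_mono)
    also have "\<dots> \<le> (\<Sum>k=1..<n. \<epsilon> * (real k * \<bar>\<Delta> k\<bar>))"
      using ep by (intro sum_mono2) (auto simp: K_def)
    also have "\<dots> = \<epsilon> * (\<Sum>k=1..<n. real k * \<bar>\<Delta> k\<bar>)" by (simp add: sum_distrib_left)
    also have "\<dots> \<le> \<epsilon> * (real n powr (\<alpha> + 1) + A)"
      using T_bound[where n=n and \<alpha>=\<alpha>] ep unfolding \<Delta>_def A_def by (intro mult_left_mono) auto
    finally have s2': "(\<Sum>k=K..<n. \<bar>e k\<bar> * \<bar>\<Delta> k\<bar>) \<le> \<epsilon> * (real n powr (\<alpha> + 1) + A)" .
    have t1: "\<bar>e n * real n powr \<alpha>\<bar> \<le> \<epsilon> * real n powr (\<alpha> + 1)"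
    proof -
      have "\<bar>e n * real n powr \<alpha>\<bar> = \<bar>e n\<bar> * real n powr \<alpha>" by (simp add: abs_mult)
      also have "\<dots> \<le> (\<epsilon> * real n) * real n powr \<alpha>" using eK[OF nK] by (intro mult_right_mono) auto
      also have "\<dots> = \<epsilon> * real n powr (\<alpha> + 1)" using n1 by (simp add: powr_add)
      finally show ?thesis .
    qed
    have PA: "real n powr (\<alpha> + 1) \<le> (\<alpha> + 2) * A" unfolding A_def using pow_le_asum[OF a n1] .
    have main: "\<bar>wcnt \<alpha> E n - L * A\<bar> \<le> M + \<epsilon> * c * A"
    proof -
      have "\<bar>wcnt \<alpha> E n - L * A\<bar> = \<bar>e n * real n powr \<alpha> + (\<Sum>k=1..<n. e k * \<Delta> k)\<bar>"
        unfolding A_def wcnt_minus e_def \<Delta>_def ..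
      also have "\<dots> \<le> \<bar>e n * real n powr \<alpha>\<bar> + \<bar>\<Sum>k=1..<n. e k * \<Delta> k\<bar>" by (rule abs_triangle_ineq)
      also have "\<bar>\<Sum>k=1..<n. e k * \<Delta> k\<bar> \<le> (\<Sum>k=1..<n. \<bar>e k\<bar> * \<bar>\<Delta> k\<bar>)"
        by (rule order_trans[OF sum_abs]) (simp add: abs_mult)
      finally have "\<bar>wcnt \<alpha> E n - L * A\<bar> \<le> \<epsilon> * real n powr (\<alpha> + 1) + (M + \<epsilon> * (real n powr (\<alpha> + 1) + A))"
        using t1 split s2' by linarith
      also have "\<dots> = M + \<epsilon> * (2 * real n powr (\<alpha> + 1) + A)" by (simp add: algebra_simps)
      also have "\<dots> \<le> M + \<epsilon> * (2 * ((\<alpha> + 2) * A) + A)"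
        using PA ep by (intro add_left_mono mult_left_mono) auto
      also have "\<dots> = M + \<epsilon> * c * A" by (simp add: c_def algebra_simps)
      finally show ?thesis .
    qed
    have "wratio \<alpha> E n - L = (wcnt \<alpha> E n - L * A) / A"
      unfolding wratio_def wcnt_Npos A_def[symmetric] using Apos by (simp add: field_simps)
    then have "norm (wratio \<alpha> E n - L) = \<bar>wcnt \<alpha> E n - L * A\<bar> / A" using Apos by simp
    also have "\<dots> \<le> (M + \<epsilon> * c * A) / A" using main Apos by (intro divide_right_mono) auto
    also have "\<dots> = M / A + r / 4" using Apos c by (simp add: \<epsilon>_def field_simps)
    also have "M / A < r / 2"
    proof -
      have "2 * M / r < A" using AN by linarith
      then have "2 * M < A * r" using r by (simp add: field_simps)
      then show ?thesis using Apos r by (simp add: field_simps)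
    qed
    finally show "norm (wratio \<alpha> E n - L) < r" using r by linarith
  qed
qed



lemma wratio_bounds: "0 \<le> wratio \<alpha> E n \<and> wratio \<alpha> E n \<le> 1"
proof -
  have NI: "Npos \<inter> {1..n} = {1..n}" by (auto simp: Npos_def)
  have a: "0 \<le> wcnt \<alpha> E n" unfolding wcnt_def by (intro sum_nonneg) auto
  have b: "wcnt \<alpha> E n \<le> wcnt \<alpha> Npos n" unfolding wcnt_def NI
    by (intro sum_mono2) auto
  show ?thesis
  proof (cases "wcnt \<alpha> Npos n = 0")
    case True
    then show ?thesis by (simp add: wratio_def)
  next
    case False
    then have "0 < wcnt \<alpha> Npos n" using a b by linarith
    then show ?thesis using a b by (simp add: wratio_def divide_le_eq_1)
  qed
qed

lemma fu_bot: "free_ultrafilter F \<Longrightarrow> F \<noteq> bot"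
  by (simp add: free_ultrafilter_def)

lemma fu_seq: "free_ultrafilter F \<Longrightarrow> F \<le> sequentially"
  by (simp add: free_ultrafilter_def cofinite_eq_sequentially)

lemma mu_tendsto:
  assumes "free_ultrafilter F"
  shows "(wratio \<alpha> E \<longlongrightarrow> mu_alpha_F F \<alpha> E) F" "0 \<le> mu_alpha_F F \<alpha> E" "mu_alpha_F F \<alpha> E \<le> 1"
  using fu_tendsto[OF assms, of 0 "wratio \<alpha> E" 1] wratio_bounds
  unfolding mu_alpha_F_def F_lim_def by auto

lemma fu_Lim_eq:
  assumes "free_ultrafilter F" "(g \<longlongrightarrow> L) F"
  shows "Lim F g = (L :: real)"
  using tendsto_Lim[OF fu_bot[OF assms(1)] assms(2)] .

lemma mu_eq:
  assumes "free_ultrafilter F" "(wratio \<alpha> E \<longlongrightarrow> L) F"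
  shows "mu_alpha_F F \<alpha> E = L"
  unfolding mu_alpha_F_def F_lim_def using fu_Lim_eq[OF assms] .

lemma wcnt_union: "E \<inter> G = {} \<Longrightarrow> wcnt \<alpha> (E \<union> G) n = wcnt \<alpha> E n + wcnt \<alpha> G n"
proof -
  assume d: "E \<inter> G = {}"
  have "(E \<union> G) \<inter> {1..n} = (E \<inter> {1..n}) \<union> (G \<inter> {1..n})" by auto
  moreover have "(E \<inter> {1..n}) \<inter> (G \<inter> {1..n}) = {}" using d by auto
  ultimately show ?thesis unfolding wcnt_def by (simp add: sum.union_disjoint)
qed

lemma point_density:
  assumes F: "free_ultrafilter F" and a: "-1 \<le> \<alpha>"
  shows "density_measure (\<lambda>E. mu_alpha_F F \<alpha> E)"
  unfolding density_measure_def
proof (intro conjI allI impI)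
  fix E show "0 \<le> mu_alpha_F F \<alpha> E" "mu_alpha_F F \<alpha> E \<le> 1" using mu_tendsto[OF F] by auto
next
  have "eventually (\<lambda>n. n \<ge> 1) F" using fu_seq[OF F] eventually_ge_at_top
    by (rule filter_leD)
  moreover have "wratio \<alpha> Npos n = 1" if "n \<ge> 1" for n
  proof -
    have "asum \<alpha> n > 0" using asum_pos[OF a that] .
    then show ?thesis by (simp add: wratio_def wcnt_Npos)
  qed
  ultimately have "eventually (\<lambda>n. wratio \<alpha> Npos n = 1) F"
    by (simp add: eventually_mono)
  then have "(wratio \<alpha> Npos \<longlongrightarrow> 1) F"
    by (rule tendsto_eventually[OF eventually_mono]) auto
  then show "mu_alpha_F F \<alpha> Npos = 1" by (rule mu_eq[OF F])
next
  fix E G :: "nat set" assume d: "E \<inter> G = {}"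
  have "wratio \<alpha> (E \<union> G) = (\<lambda>n. wratio \<alpha> E n + wratio \<alpha> G n)"
    using wcnt_union[OF d] by (auto simp: wratio_def add_divide_distrib)
  moreover have "((\<lambda>n. wratio \<alpha> E n + wratio \<alpha> G n) \<longlongrightarrow> mu_alpha_F F \<alpha> E + mu_alpha_F F \<alpha> G) F"
    by (intro tendsto_add mu_tendsto[OF F])
  ultimately show "mu_alpha_F F \<alpha> (E \<union> G) = mu_alpha_F F \<alpha> E + mu_alpha_F F \<alpha> G"
    by (intro mu_eq[OF F]) simp
next
  fix E L assume "has_density E L"
  then have "wratio \<alpha> E \<longlonglongrightarrow> L" by (rule wratio_density[OF a])
  then have "(wratio \<alpha> E \<longlongrightarrow> L) F" by (rule tendsto_mono[OF fu_seq[OF F]])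
  then show "mu_alpha_F F \<alpha> E = L" by (rule mu_eq[OF F])
qed

lemma mix_density:
  assumes "density_measure m1" "density_measure m2" "0 \<le> p" "p \<le> 1"
  shows "density_measure (\<lambda>E. m1 E * p + m2 E * (1 - p))"
  using assms unfolding density_measure_def
proof (intro conjI allI impI)
  fix E assume E: "E \<subseteq> Npos"
  have "0 \<le> m1 E" "m1 E \<le> 1" "0 \<le> m2 E" "m2 E \<le> 1" using assms E unfolding density_measure_def by auto
  moreover have "m1 E * p \<le> p" "m2 E * (1 - p) \<le> 1 - p"
    using calculation assms by (auto intro: mult_left_le_one_le)
  ultimately show "0 \<le> m1 E * p + m2 E * (1 - p)" "m1 E * p + m2 E * (1 - p) \<le> 1"
    using assms by auto
qed (auto simp: algebra_simps)

lemma mu_lip: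
  assumes F: "free_ultrafilter F" and a: "-1 < \<alpha>" "\<alpha> \<le> \<beta>" "(\<beta> - \<alpha>) * Cst \<alpha> \<le> 1/2"
  shows "\<bar>mu_alpha_F F \<beta> E - mu_alpha_F F \<alpha> E\<bar> \<le> 4 * ((\<beta> - \<alpha>) * Cst \<alpha>)"
proof -
  have lim: "((\<lambda>n. wratio \<beta> E n - wratio \<alpha> E n) \<longlongrightarrow> mu_alpha_F F \<beta> E - mu_alpha_F F \<alpha> E) F"
    by (intro tendsto_diff mu_tendsto[OF F])
  have b: "\<And>n. \<bar>wratio \<beta> E n - wratio \<alpha> E n\<bar> \<le> 4 * ((\<beta> - \<alpha>) * Cst \<alpha>)"
    using wratio_lip[OF a] .
  have e1: "eventually (\<lambda>n. wratio \<beta> E n - wratio \<alpha> E n \<le> 4 * ((\<beta> - \<alpha>) * Cst \<alpha>)) F"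
    by (rule always_eventually) (use b in \<open>auto simp: abs_le_iff\<close>)
  have e2: "eventually (\<lambda>n. - (4 * ((\<beta> - \<alpha>) * Cst \<alpha>)) \<le> wratio \<beta> E n - wratio \<alpha> E n) F"
  proof (rule always_eventually, rule allI)
    fix n show "- (4 * ((\<beta> - \<alpha>) * Cst \<alpha>)) \<le> wratio \<beta> E n - wratio \<alpha> E n"
      using b[of n] by (simp add: abs_le_iff)
  qed
  have "mu_alpha_F F \<beta> E - mu_alpha_F F \<alpha> E \<le> 4 * ((\<beta> - \<alpha>) * Cst \<alpha>)"
    using tendsto_upperbound[OF lim e1] fu_bot[OF F] by simp
  moreover have "- (4 * ((\<beta> - \<alpha>) * Cst \<alpha>)) \<le> mu_alpha_F F \<beta> E - mu_alpha_F F \<alpha> E"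
    using tendsto_lowerbound[OF lim e2] fu_bot[OF F] by simp
  ultimately show ?thesis by (simp add: abs_le_iff)
qed



lemma topspace_stone: "topspace stone_topology = betaNstar"
proof -
  have "UNIV \<in> range (\<lambda>A. {F. eventually (\<lambda>n. n \<in> A) F})"
    by (rule range_eqI[of _ _ UNIV]) simp
  then have "\<Union>(range (\<lambda>A. {F :: nat filter. eventually (\<lambda>n. n \<in> A) F})) = UNIV" by blast
  then show ?thesis
    by (simp only: stone_topology_def topspace_subtopology topology_generated_by_topspace) simp
qed

lemma topspace_Omega: "topspace Omega_topology = betaNstar \<times> {-1..}"
  by (simp only: Omega_topology_def topspace_prod_topology topspace_stone topspace_euclidean_subtopology)

lemma space_borel_of: "space (borel_of X) = topspace X"
  unfolding borel_of_def by (simp add: space_measure_of_conv)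

lemma sets_borel_of: "sets (borel_of X) = sigma_sets (topspace X) {U. openin X U}"
  unfolding borel_of_def by (rule sets_measure_of) (use openin_subset in blast)

lemma cont_meas:
  assumes "continuous_map X euclideanreal h"
  shows "h \<in> borel_measurable (borel_of X)"
proof (rule borel_measurableI)
  fix S :: "real set" assume "open S"
  then have "openin euclideanreal S" by (metis open_openin)
  then have op: "openin X {x \<in> topspace X. h x \<in> S}"
    using openin_continuous_map_preimage[OF assms] by blast
  have eq: "h -` S \<inter> space (borel_of X) = {x \<in> topspace X. h x \<in> S}"
    unfolding space_borel_of by blast
  show "h -` S \<inter> space (borel_of X) \<in> sets (borel_of X)"
    unfolding sets_borel_of eq by (rule sigma_sets.Basic) (use op in simp)
qed

lemma cont_stone: "continuous_map stone_topology euclideanreal (\<lambda>F. mu_alpha_F F \<alpha> E)"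
  unfolding continuous_map_def
proof (intro conjI allI impI)
  show "(\<lambda>F. mu_alpha_F F \<alpha> E) \<in> topspace stone_topology \<rightarrow> topspace euclideanreal" by simp
  fix U :: "real set" assume "openin euclideanreal U"
  then have U: "open U" by (metis open_openin)
  show "openin stone_topology {x \<in> topspace stone_topology. mu_alpha_F x \<alpha> E \<in> U}"
  proof (subst openin_subopen, intro ballI)
    fix F0 assume F0: "F0 \<in> {x \<in> topspace stone_topology. mu_alpha_F x \<alpha> E \<in> U}"
    then have F0b: "free_ultrafilter F0" and LU: "mu_alpha_F F0 \<alpha> E \<in> U"
      by (auto simp: topspace_stone betaNstar_def)
    define L where "L = mu_alpha_F F0 \<alpha> E"
    obtain e where e: "0 < e" "ball L e \<subseteq> U" using U LU unfolding L_def by (meson openE)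
    define P where "P = {n. dist (wratio \<alpha> E n) L < e / 2}"
    have evP: "eventually (\<lambda>n. n \<in> P) F0"
      unfolding P_def L_def using tendstoD[OF mu_tendsto(1)[OF F0b], of "e/2"] e by simp
    define T where "T = betaNstar \<inter> {G. eventually (\<lambda>n. n \<in> P) G}"
    have "openin stone_topology T"
      unfolding stone_topology_def T_def
      by (intro openin_subtopology_Int2 topology_generated_by_Basis rangeI)
    moreover have "F0 \<in> T" using F0 evP by (auto simp: T_def topspace_stone)
    moreover have "T \<subseteq> {x \<in> topspace stone_topology. mu_alpha_F x \<alpha> E \<in> U}"
    proof
      fix G assume G: "G \<in> T"
      then have Gb: "free_ultrafilter G" and evG: "eventually (\<lambda>n. n \<in> P) G"
        by (auto simp: T_def betaNstar_def)
      have "eventually (\<lambda>n. wratio \<alpha> E n \<in> cball L (e/2)) G"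
        using evG by eventually_elim (auto simp: P_def dist_commute)
      then have "mu_alpha_F G \<alpha> E \<in> cball L (e/2)"
        using Lim_in_closed_set[OF closed_cball _ fu_bot[OF Gb] mu_tendsto(1)[OF Gb]] by blast
      then have "mu_alpha_F G \<alpha> E \<in> ball L e" using e by auto
      then show "G \<in> {x \<in> topspace stone_topology. mu_alpha_F x \<alpha> E \<in> U}"
        using e Gb by (auto simp: topspace_stone betaNstar_def)
    qed
    ultimately show "\<exists>T. openin stone_topology T \<and> F0 \<in> T \<and>
        T \<subseteq> {x \<in> topspace stone_topology. mu_alpha_F x \<alpha> E \<in> U}" by blast
  qed
qed

abbreviation "OM \<equiv> borel_of Omega_topology"

lemma meas_fixed_alpha: "(\<lambda>\<omega>. mu_alpha_F (fst \<omega>) \<alpha> E) \<in> borel_measurable OM"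
proof -
  have "continuous_map Omega_topology euclideanreal ((\<lambda>F. mu_alpha_F F \<alpha> E) \<circ> fst)"
    unfolding Omega_topology_def by (intro continuous_map_compose[OF continuous_map_fst cont_stone])
  then show ?thesis by (intro cont_meas) (simp add: comp_def)
qed

lemma meas_snd: "snd \<in> borel_measurable OM"
proof -
  have "continuous_map Omega_topology (top_of_set {-1..}) snd"
    unfolding Omega_topology_def by (rule continuous_map_snd)
  then have "continuous_map Omega_topology euclideanreal snd"
    by (rule continuous_map_into_fulltopology)
  then show ?thesis by (rule cont_meas)
qed

definition qm :: "nat \<Rightarrow> real \<Rightarrow> real" where
  "qm m x = real_of_int \<lceil>2^m * x\<rceil> / 2^m"

lemma meas_fm: "(\<lambda>\<omega>. mu_alpha_F (fst \<omega>) (qm m (snd \<omega>)) E) \<in> borel_measurable OM"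
proof (rule borel_measurableI)
  fix U :: "real set" assume "open U"
  define g where "g \<omega> = \<lceil>(2::real)^m * snd \<omega>\<rceil>" for \<omega> :: "nat filter \<times> real"
  have gm: "g \<in> measurable OM (count_space UNIV)"
    unfolding g_def
    by (intro measurable_compose[OF _ measurable_real_ceiling] borel_measurable_times
        borel_measurable_const meas_snd)
  have eq: "(\<lambda>\<omega>. mu_alpha_F (fst \<omega>) (qm m (snd \<omega>)) E) -` U \<inter> space OM
     = (\<Union>j\<in>UNIV. ((\<lambda>\<omega>. mu_alpha_F (fst \<omega>) (real_of_int j / 2^m) E) -` U \<inter> space OM) \<inter> (g -` {j} \<inter> space OM))"
    by (auto simp: qm_def g_def)
  show "(\<lambda>\<omega>. mu_alpha_F (fst \<omega>) (qm m (snd \<omega>)) E) -` U \<inter> space OM \<in> sets OM"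
  proof -
    have A: "(\<lambda>\<omega>. mu_alpha_F (fst \<omega>) (real_of_int j / 2 ^ m) E) -` U \<inter> space OM \<in> sets OM" for j :: int
      using measurable_sets[OF meas_fixed_alpha borel_open[OF \<open>open U\<close>]] by blast
    have B: "g -` {j} \<inter> space OM \<in> sets OM" for j
      using measurable_sets[OF gm, of "{j}"] by simp
    show ?thesis unfolding eq by (intro sets.countable_UN'' sets.Int A B) simp
  qed
qed

lemma qm_bounds: "x \<le> qm m x \<and> qm m x \<le> x + inverse (2^m)"
proof -
  have p: "(0::real) < 2^m" by simp
  have c1: "2^m * x \<le> real_of_int \<lceil>2^m * x\<rceil>" by simp
  have c2: "real_of_int \<lceil>2^m * x\<rceil> \<le> 2^m * x + 1" using ceiling_correct[of "2^m * x"] by linarith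
  show ?thesis unfolding qm_def using c1 c2 p
    by (auto simp: field_simps)
qed

lemma qm_minus1: "qm m (-1) = -1"
proof -
  have "(2::real)^m * -1 = real_of_int (- (2^m))" by simp
  then have "\<lceil>(2::real)^m * -1\<rceil> = - (2^m)" by (simp only: ceiling_of_int)
  then show ?thesis unfolding qm_def by simp
qed

lemma qm_tendsto: "(\<lambda>m. qm m x) \<longlonglongrightarrow> x"
proof -
  have "(\<lambda>m. qm m x - x) \<longlonglongrightarrow> 0"
  proof (rule Lim_null_comparison)
    show "eventually (\<lambda>m. norm (qm m x - x) \<le> inverse (2^m)) sequentially"
    proof (intro always_eventually allI)
      fix m show "norm (qm m x - x) \<le> inverse (2^m)"
        using qm_bounds[where x=x and m=m] by (simp add: abs_le_iff)
    qed
    show "(\<lambda>m. inverse ((2::real)^m)) \<longlonglongrightarrow> 0" by (rule LIMSEQ_inverse_realpow_zero) simp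
  qed
  then show ?thesis by (simp add: LIM_zero_iff)
qed

lemma meas_mu: "(\<lambda>(F, \<alpha>). mu_alpha_F F \<alpha> E) \<in> borel_measurable OM"
proof (rule borel_measurable_LIMSEQ_real[OF _ meas_fm])
  fix \<omega> assume "\<omega> \<in> space OM"
  then obtain F \<beta> where w: "\<omega> = (F, \<beta>)" and Fb: "free_ultrafilter F" and b: "-1 \<le> \<beta>"
    by (cases \<omega>) (auto simp: space_borel_of topspace_Omega betaNstar_def)
  show "(\<lambda>m. mu_alpha_F (fst \<omega>) (qm m (snd \<omega>)) E) \<longlonglongrightarrow> (case \<omega> of (F, \<alpha>) \<Rightarrow> mu_alpha_F F \<alpha> E)"
  proof (cases "\<beta> = -1")
    case True
    then show ?thesis using w by (simp add: qm_minus1)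
  next
    case False
    then have b1: "-1 < \<beta>" using b by simp
    have C: "0 < Cst \<beta>" using Cst_ge1[OF b1] by simp
    have t0: "(\<lambda>m. (qm m \<beta> - \<beta>) * Cst \<beta>) \<longlonglongrightarrow> 0"
      using qm_tendsto[of \<beta>] by (intro tendsto_mult_left_zero) (simp add: LIM_zero_iff)
    have ev: "eventually (\<lambda>m. (qm m \<beta> - \<beta>) * Cst \<beta> < 1/2) sequentially"
      using order_tendstoD(2)[OF t0, of "1/2"] by simp
    have "(\<lambda>m. mu_alpha_F F (qm m \<beta>) E - mu_alpha_F F \<beta> E) \<longlonglongrightarrow> 0"
    proof (rule Lim_null_comparison)
      show "eventually (\<lambda>m. norm (mu_alpha_F F (qm m \<beta>) E - mu_alpha_F F \<beta> E) \<le> 4 * ((qm m \<beta> - \<beta>) * Cst \<beta>)) sequentially"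
        using ev
      proof eventually_elim
        case (elim m)
        then show ?case using mu_lip[OF Fb b1, of "qm m \<beta>" E] qm_bounds[of \<beta> m] by simp
      qed
      show "(\<lambda>m. 4 * ((qm m \<beta> - \<beta>) * Cst \<beta>)) \<longlonglongrightarrow> 0"
        using tendsto_mult_right_zero[OF t0, of 4] by simp
    qed
    then show ?thesis using w by (simp add: LIM_zero_iff)
  qed
qed



lemma lower_choice:
  assumes "lower_d_inf A < ereal x"
  shows "\<exists>F \<alpha>. free_ultrafilter F \<and> -1 \<le> \<alpha> \<and> mu_alpha_F F \<alpha> A \<le> x"
proof -
  obtain \<alpha> where a: "\<alpha> \<in> {-1..}" and l: "lower_d_alpha \<alpha> A < ereal x"
    using assms unfolding lower_d_inf_def by (auto simp: INF_less_iff)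
  have fr: "frequently (\<lambda>n. wratio \<alpha> A n < x) sequentially"
  proof (rule ccontr)
    assume "\<not> frequently (\<lambda>n. wratio \<alpha> A n < x) sequentially"
    then have "eventually (\<lambda>n. ereal x \<le> ereal (wratio \<alpha> A n)) sequentially"
      unfolding not_frequently by (auto elim: eventually_mono)
    then have "ereal x \<le> lower_d_alpha \<alpha> A"
      unfolding lower_d_alpha_def by (rule Liminf_bounded)
    then show False using l by simp
  qed
  then have "infinite {n. wratio \<alpha> A n < x}"
    by (simp add: frequently_cofinite[symmetric] cofinite_eq_sequentially)
  then obtain F where F: "free_ultrafilter F" and ev: "eventually (\<lambda>n. n \<in> {n. wratio \<alpha> A n < x}) F"
    using ex_free_ultra by blast
  have "mu_alpha_F F \<alpha> A \<le> x"
    using ev fu_bot[OF F]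
    by (intro tendsto_upperbound[OF mu_tendsto(1)[OF F]]) (auto elim: eventually_mono)
  then show ?thesis using F a by auto
qed

lemma upper_choice:
  assumes "ereal x < upper_d_inf A"
  shows "\<exists>F \<alpha>. free_ultrafilter F \<and> -1 \<le> \<alpha> \<and> x \<le> mu_alpha_F F \<alpha> A"
proof -
  obtain \<alpha> where a: "\<alpha> \<in> {-1..}" and l: "ereal x < upper_d_alpha \<alpha> A"
    using assms unfolding upper_d_inf_def by (auto simp: less_SUP_iff)
  have fr: "frequently (\<lambda>n. x < wratio \<alpha> A n) sequentially"
  proof (rule ccontr)
    assume "\<not> frequently (\<lambda>n. x < wratio \<alpha> A n) sequentially"
    then have "eventually (\<lambda>n. ereal (wratio \<alpha> A n) \<le> ereal x) sequentially"
      unfolding not_frequently by (auto elim: eventually_mono)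
    then have "upper_d_alpha \<alpha> A \<le> ereal x"
      unfolding upper_d_alpha_def by (rule Limsup_bounded)
    then show False using l by simp
  qed
  then have "infinite {n. x < wratio \<alpha> A n}"
    by (simp add: frequently_cofinite[symmetric] cofinite_eq_sequentially)
  then obtain F where F: "free_ultrafilter F" and ev: "eventually (\<lambda>n. n \<in> {n. x < wratio \<alpha> A n}) F"
    using ex_free_ultra by blast
  have "x \<le> mu_alpha_F F \<alpha> A"
    using ev fu_bot[OF F]
    by (intro tendsto_lowerbound[OF mu_tendsto(1)[OF F]]) (auto elim: eventually_mono)
  then show ?thesis using F a by auto
qed

theorem theorem4p4:
  fixes A :: "nat set" and x :: real
  assumes "A \<subseteq> Npos"
    and "lower_d_inf A < ereal x" and "ereal x < upper_d_inf A"
  shows "\<exists>(\<psi> :: (nat filter \<times> real) measure) (\<mu> :: nat set \<Rightarrow> real).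
           prob_space \<psi> \<and>
           space \<psi> = topspace Omega_topology \<and>
           sets \<psi> = sets (borel_of Omega_topology) \<and>
           (\<forall>E. E \<subseteq> Npos \<longrightarrow>
              integrable \<psi> (\<lambda>(F, \<alpha>). mu_alpha_F F \<alpha> E) \<and>
              \<mu> E = (\<integral>(F, \<alpha>). mu_alpha_F F \<alpha> E \<partial>\<psi>)) \<and>
           density_measure \<mu> \<and> \<mu> A = x"
proof -
  obtain F1 a1 where F1: "free_ultrafilter F1" "-1 \<le> a1" "mu_alpha_F F1 a1 A \<le> x"
    using lower_choice[OF assms(2)] by blast
  obtain F2 a2 where F2: "free_ultrafilter F2" "-1 \<le> a2" "x \<le> mu_alpha_F F2 a2 A"
    using upper_choice[OF assms(3)] by blast
  define y1 where "y1 = mu_alpha_F F1 a1 A"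
  define y2 where "y2 = mu_alpha_F F2 a2 A"
  have y12: "y1 \<le> x" "x \<le> y2" using F1 F2 by (auto simp: y1_def y2_def)
  define p where "p = (if y1 = y2 then 1 else (y2 - x) / (y2 - y1))"
  have p01: "0 \<le> p" "p \<le> 1" using y12 by (auto simp: p_def field_simps)
  have px: "y1 * p + y2 * (1 - p) = x"
  proof (cases "y1 = y2")
    case True then show ?thesis using y12 by (simp add: p_def)
  next
    case False
    then have d: "y2 - y1 \<noteq> 0" by simp
    have e1: "y1 * p + y2 * (1 - p) = y2 - p * (y2 - y1)" by (simp add: algebra_simps)
    have e2: "p * (y2 - y1) = y2 - x" using False d by (simp add: p_def)
    show ?thesis using e1 e2 by simp
  qed
  define \<omega>1 where "\<omega>1 = (F1, a1)"
  define \<omega>2 where "\<omega>2 = (F2, a2)"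
  have w12: "\<omega>1 \<in> space OM" "\<omega>2 \<in> space OM"
    using F1 F2 by (auto simp: \<omega>1_def \<omega>2_def space_borel_of topspace_Omega betaNstar_def)
  define h where "h b = (if b then \<omega>1 else \<omega>2)" for b
  have hm: "h \<in> measurable (measure_pmf (bernoulli_pmf p)) OM"
    using w12 by (auto simp: h_def)
  define \<psi> where "\<psi> = distr (measure_pmf (bernoulli_pmf p)) OM h"
  define \<mu> where "\<mu> E = (\<integral>(F, \<alpha>). mu_alpha_F F \<alpha> E \<partial>\<psi>)" for E
  have int: "integrable \<psi> (\<lambda>(F, \<alpha>). mu_alpha_F F \<alpha> E)" for E
  proof -
    have "finite (set_pmf (bernoulli_pmf p))" by (rule finite_subset[OF subset_UNIV]) simp
    then show ?thesis unfolding \<psi>_def integrable_distr_eq[OF hm meas_mu]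
      by (rule integrable_measure_pmf_finite)
  qed
  have mueq: "\<mu> E = mu_alpha_F F1 a1 E * p + mu_alpha_F F2 a2 E * (1 - p)" for E
    unfolding \<mu>_def \<psi>_def integral_distr[OF hm meas_mu]
    using p01 by (simp add: h_def \<omega>1_def \<omega>2_def)
  have dm: "density_measure \<mu>"
  proof -
    have "density_measure (\<lambda>E. mu_alpha_F F1 a1 E * p + mu_alpha_F F2 a2 E * (1 - p))"
      by (intro mix_density point_density F1 F2 p01)
    moreover have "\<mu> = (\<lambda>E. mu_alpha_F F1 a1 E * p + mu_alpha_F F2 a2 E * (1 - p))"
      using mueq by (intro ext)
    ultimately show ?thesis by simp
  qed
  have "\<mu> A = x" using mueq[of A] px by (simp add: y1_def y2_def)
  moreover have "prob_space \<psi>" unfolding \<psi>_def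
    by (rule prob_space.prob_space_distr[OF prob_space_measure_pmf hm])
  moreover have "space \<psi> = topspace Omega_topology" by (simp add: \<psi>_def space_borel_of)
  moreover have "sets \<psi> = sets (borel_of Omega_topology)" by (simp add: \<psi>_def)
  ultimately show ?thesis using int dm
    by (intro exI[of _ \<psi>] exI[of _ \<mu>]) (simp add: \<mu>_def)
qed

end
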